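(* Let $H$ be a maximal isotropy subgroup of the $G\times S^1$-action on $V_0$, let $N:=N(H)/H$ (with $N(H)$ the normalizer of $H$ in $G\times S^1$) and let $N^0$ be the identity component of $N$. Then either (i) $N^0\cong S^1$ and $N/N^0$ is trivial or isomorphic to $\mathbb{Z}_2$ (then $H$ is called maximal complex), or (ii) $N^0\cong SU(2)$ and $N\cong SU(2)$ (then $H$ is called maximal quaternionic).
   Context: Let $G$ be a compact Lie group and $V_0$ a real $2n$-dimensional representation of $G\times S^1$ in which the $S^1$ factor acts by $\theta\mapsto e^{\theta\mathbb{J}_{2n}}$ (with $\mathbb{J}_{2n}=\begin{pmatrix}0&-\mathbb{I}_n\\ \mathbb{I}_n&0\end{pmatrix}$, i.e. scalar multiplication by $e^{i\theta}$ for the complex structure $\mathbb{J}_{2n}$), the $G$-action commutes with $\mathbb{J}_{2n}$, and $G\times S^1$ acts complex-irreducibly on $V_0$. (This is the representation on the subspace $V_0$ of the resonance space arising in a $G$-symmetric Hamiltonian Hopf bifurcation under the genericity hypothesis that the resonance space splits into two complex-dual $G\times S^1$-irreducible subspaces.) An isotropy subgroup is the stabilizer of some point of $V_0$; it is maximal if it is maximal among proper isotropy subgroups (those different from $G\times S^1$). *)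

theory Defs
  imports "HOL-Analysis.Analysis" "HOL-Algebra.Group_Action" "HOL-Algebra.Elementary_Groups"
begin

text \<open>A compact Lie group G is modelled as a compact subgroup of GL(m,R), i.e. a set of
  real m x m matrices forming a group under matrix multiplication.\<close>
definition matgrp :: "(real^'m^'m) set \<Rightarrow> (real^'m^'m) monoid" where
  "matgrp G = \<lparr>carrier = G, monoid.mult = (\<lambda>A B. A ** B), one = mat 1\<rparr>"

definition circle_group :: "complex monoid" where
  "circle_group = \<lparr>carrier = sphere 0 1, monoid.mult = (*), one = 1\<rparr>"

definition GxS1 :: "(real^'m^'m) set \<Rightarrow> ((real^'m^'m) \<times> complex) monoid" where
  "GxS1 G = \<lparr>carrier = G \<times> sphere 0 1,
             monoid.mult = (\<lambda>(a,z) (b,w). (a ** b, z * w)), one = (mat 1, 1)\<rparr>"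

text \<open>Action of (g,z) on V_0 = C^n: the S^1 factor acts by scalar multiplication with z = e^{i theta},
  which under R^{2n} = C^n is exactly e^{theta J_{2n}}; G acts complex-linearly through rho.\<close>
definition act :: "(real^'m^'m \<Rightarrow> complex^'n^'n) \<Rightarrow> ((real^'m^'m) \<times> complex) \<Rightarrow> complex^'n \<Rightarrow> complex^'n" where
  "act \<rho> gz v = snd gz *s (\<rho> (fst gz) *v v)"

definition isotropy :: "(real^'m^'m) set \<Rightarrow> (real^'m^'m \<Rightarrow> complex^'n^'n) \<Rightarrow> complex^'n
    \<Rightarrow> ((real^'m^'m) \<times> complex) set" where
  "isotropy G \<rho> v = {gz \<in> carrier (GxS1 G). act \<rho> gz v = v}"

definition is_isotropy_subgroup where
  "is_isotropy_subgroup G \<rho> H \<longleftrightarrow> (\<exists>v. H = isotropy G \<rho> v)"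

definition is_maximal_isotropy_subgroup where
  "is_maximal_isotropy_subgroup G \<rho> H \<longleftrightarrow>
     is_isotropy_subgroup G \<rho> H \<and> H \<noteq> carrier (GxS1 G) \<and>
     (\<forall>K. is_isotropy_subgroup G \<rho> K \<and> K \<noteq> carrier (GxS1 G) \<and> H \<subseteq> K \<longrightarrow> K = H)"

definition complex_irreducible where
  "complex_irreducible G (\<rho> :: real^'m^'m \<Rightarrow> complex^'n^'n) \<longleftrightarrow>
     (\<forall>W. vec.subspace W \<and> (\<forall>gz\<in>carrier (GxS1 G). \<forall>v\<in>W. act \<rho> gz v \<in> W)
          \<longrightarrow> W = {0} \<or> W = UNIV)"

definition quotient_topology :: "'a topology \<Rightarrow> ('a \<Rightarrow> 'b) \<Rightarrow> 'b set \<Rightarrow> 'b topology" where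
  "quotient_topology X q Q = topology (\<lambda>U. U \<subseteq> Q \<and> openin X {x \<in> topspace X. q x \<in> U})"

lemma istopology_quotient:
  "istopology (\<lambda>U. U \<subseteq> Q \<and> openin X {x \<in> topspace X. q x \<in> U})"
proof -
  have int: "{x \<in> topspace X. q x \<in> S \<inter> T} =
             {x \<in> topspace X. q x \<in> S} \<inter> {x \<in> topspace X. q x \<in> T}" for S T by auto
  have un: "{x \<in> topspace X. q x \<in> \<Union>K} = \<Union>((\<lambda>S. {x \<in> topspace X. q x \<in> S}) ` K)" for K by auto
  show ?thesis unfolding istopology_def
  proof (rule conjI; intro allI impI)
    fix S T
    assume "S \<subseteq> Q \<and> openin X {x \<in> topspace X. q x \<in> S}"
                   and "T \<subseteq> Q \<and> openin X {x \<in> topspace X. q x \<in> T}"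
    then show "S \<inter> T \<subseteq> Q \<and> openin X {x \<in> topspace X. q x \<in> S \<inter> T}"
      unfolding int by auto
  next
    fix K assume "\<forall>S\<in>K. S \<subseteq> Q \<and> openin X {x \<in> topspace X. q x \<in> S}"
    then show "\<Union>K \<subseteq> Q \<and> openin X {x \<in> topspace X. q x \<in> \<Union>K}"
      unfolding un by (auto intro!: openin_Union)
  qed
qed

definition circle_top :: "complex topology" where
  "circle_top = subtopology euclidean (sphere 0 1)"

definition conj_transpose :: "complex^'n^'k \<Rightarrow> complex^'k^'n" where
  "conj_transpose A = (\<chi> i j. cnj (A $ j $ i))"

definition SU2 :: "(complex^2^2) set" where
  "SU2 = {A. A ** conj_transpose A = mat 1 \<and> det A = 1}"

definition SU2_group :: "(complex^2^2) monoid" where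
  "SU2_group = \<lparr>carrier = SU2, monoid.mult = (\<lambda>A B. A ** B), one = mat 1\<rparr>"

definition SU2_top :: "(complex^2^2) topology" where
  "SU2_top = subtopology euclidean SU2"

definition top_group_iso where
  "top_group_iso X G Y K f \<longleftrightarrow> f \<in> iso G K \<and> homeomorphic_map X Y f"

definition NH_group where
  "NH_group G H = (GxS1 G)\<lparr>carrier := normalizer (GxS1 G) H\<rparr>"

definition NmodH where
  "NmodH G H = NH_group G H Mod H"

definition NmodH_top where
  "NmodH_top G H = quotient_topology (subtopology euclidean (normalizer (GxS1 G) H))
                      (\<lambda>x. H #>\<^bsub>NH_group G H\<^esub> x) (carrier (NmodH G H))"

text \<open>Identity component N^0 of N = N(H)/H (the identity of N is the coset H).\<close>
definition N0 where
  "N0 G H = connected_component_of_set (NmodH_top G H) H"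

end

theory Submission
  imports Defs "HOL-Algebra.Zassenhaus" "HOL-Computational_Algebra.Fundamental_Theorem_Algebra" "HOL-Algebra.Generated_Groups"
begin

lemma mvs: "(A::'a::comm_ring_1^'n^'k) *v (c *s x) = c *s (A *v x)"
  by (simp add: matrix_vector_mult_def vec_eq_iff sum_distrib_left algebra_simps)

lemma circle_grp: "group circle_group"
proof (rule groupI)
  fix x assume "x \<in> carrier circle_group"
  then have "cnj x \<in> carrier circle_group \<and> cnj x * x = 1"
    by (auto simp: circle_group_def) (metis complex_norm_square mult.commute of_real_1 power_one)
  then show "\<exists>y\<in>carrier circle_group. y \<otimes>\<^bsub>circle_group\<^esub> x = \<one>\<^bsub>circle_group\<^esub>"
    by (auto simp: circle_group_def)
qed (auto simp: circle_group_def norm_mult)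

definition pev :: "(complex^'n \<Rightarrow> complex^'n) \<Rightarrow> complex^'n \<Rightarrow> complex poly \<Rightarrow> complex^'n" where
  "pev f u p = (\<Sum>i\<le>degree p. coeff p i *s (f ^^ i) u)"

locale linf =
  fixes f :: "complex^'n \<Rightarrow> complex^'n"
  assumes fa: "\<And>a b. f (a + b) = f a + f b"
    and fs: "\<And>c a. f (c *s a) = c *s f a"
begin

lemma f0: "f 0 = 0"
  using fs[of 0 0] by simp

lemma f_sum: "f (\<Sum>i\<in>A. g i) = (\<Sum>i\<in>A. f (g i))"
  by (induction A rule: infinite_finite_induct) (auto simp: f0 fa)

lemma pev_bound: "degree p \<le> n \<Longrightarrow> pev f u p = (\<Sum>i\<le>n. coeff p i *s (f ^^ i) u)"
  unfolding pev_def
  by (rule sum.mono_neutral_left) (auto simp: coeff_eq_0)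

lemma pev_add: "pev f u (p + q) = pev f u p + pev f u q"
proof -
  let ?n = "max (degree p) (degree q)"
  have "pev f u (p + q) = (\<Sum>i\<le>?n. coeff (p + q) i *s (f ^^ i) u)"
    by (rule pev_bound) (simp add: degree_add_le)
  also have "\<dots> = (\<Sum>i\<le>?n. coeff p i *s (f ^^ i) u) + (\<Sum>i\<le>?n. coeff q i *s (f ^^ i) u)"
    by (simp add: vector_sadd_rdistrib sum.distrib)
  also have "\<dots> = pev f u p + pev f u q"
    using pev_bound[where p=p and n="?n" and u=u] pev_bound[where p=q and n="?n" and u=u] by simp
  finally show ?thesis .
qed

lemma pev_smult: "pev f u (smult c p) = c *s pev f u p"
proof -
  have "pev f u (smult c p) = (\<Sum>i\<le>degree p. coeff (smult c p) i *s (f ^^ i) u)"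
    by (rule pev_bound) (simp add: degree_smult_le)
  also have "\<dots> = c *s pev f u p"
    by (simp add: pev_def vec_eq_iff sum_distrib_left mult.assoc)
  finally show ?thesis .
qed

lemma pev_pCons0: "pev f u (pCons 0 q) = f (pev f u q)"
proof -
  have "pev f u (pCons 0 q) = (\<Sum>i\<le>Suc (degree q). coeff (pCons 0 q) i *s (f ^^ i) u)"
    by (rule pev_bound) (simp add: degree_pCons_le)
  also have "\<dots> = (\<Sum>i\<le>degree q. coeff q i *s (f ^^ Suc i) u)"
    by (subst sum.atMost_Suc_shift) simp
  also have "\<dots> = f (pev f u q)"
    by (simp add: pev_def f_sum fs)
  finally show ?thesis .
qed

lemma pev_monom: "pev f u (monom c i) = c *s (f ^^ i) u"
proof -
  have "pev f u (monom c i) = (\<Sum>j\<le>i. coeff (monom c i) j *s (f ^^ j) u)"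
    by (rule pev_bound) (simp add: degree_monom_le)
  also have "\<dots> = c *s (f ^^ i) u"
    by (subst sum.cong[OF refl, where h="\<lambda>j. if j = i then c *s (f ^^ i) u else 0"]) auto
  finally show ?thesis .
qed

lemma pev_lin: "pev f u ([:-m, 1:] * q) = f (pev f u q) - m *s pev f u q"
proof -
  have "[:-m, 1:] * q = smult (-m) q + pCons 0 q" by simp
  then have "pev f u ([:-m, 1:] * q) = (-m) *s pev f u q + f (pev f u q)"
    by (simp only: pev_add pev_smult pev_pCons0)
  then show ?thesis by (simp add: vec_eq_iff)
qed

lemma pev_sum: "pev f u (\<Sum>i\<in>A. g i) = (\<Sum>i\<in>A. pev f u (g i))"
proof (induction A rule: infinite_finite_induct)
  case (infinite A) then show ?case by (simp add: pev_def)
next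
  case empty then show ?case by (simp add: pev_def)
next
  case (insert x F) then show ?case by (simp add: pev_add)
qed

lemma annih: "\<exists>p. p \<noteq> 0 \<and> pev f u p = 0"
proof (cases "inj_on (\<lambda>i. (f ^^ i) u) {..CARD('n)}")
  case False
  then obtain i j where ij: "i \<noteq> j" "(f ^^ i) u = (f ^^ j) u"
    unfolding inj_on_def by blast
  let ?p = "monom 1 i + smult (-1) (monom (1::complex) j)"
  have "coeff ?p i = 1 + (-1) * (if j = i then 1 else 0)" by (simp only: coeff_add coeff_smult coeff_monom) simp
  also have "\<dots> = 1" using ij(1) by simp
  finally have "coeff ?p i = 1" .
  then have "?p \<noteq> 0" by (metis coeff_0 zero_neq_one)
  moreover have "pev f u ?p = 0"
  proof -
    have "pev f u ?p = (f ^^ i) u + (-1) *s (f ^^ j) u" by (simp only: pev_add pev_smult pev_monom) simp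
    then show ?thesis using ij(2) by (simp add: vec_eq_iff)
  qed
  ultimately show ?thesis by blast
next
  case True
  define T where "T = (\<lambda>i. (f ^^ i) u) ` {..CARD('n)}"
  have fT: "finite T" unfolding T_def by simp
  have cT: "card T = Suc CARD('n)" unfolding T_def using card_image[OF True] by simp
  have "vec.dim T \<le> CARD('n)"
    using vec.dim_subset_UNIV[of T] by (simp add: vec.dimension_def card_cart_basis)
  then have "vec.dependent T" using cT by (intro vec.dependent_biggerset_general) simp
  then obtain c where c: "\<exists>v\<in>T. c v \<noteq> 0" "(\<Sum>v\<in>T. c v *s v) = 0"
    using vec.dependent_finite[OF fT] by blast
  define p where "p = (\<Sum>i\<le>CARD('n). monom (c ((f ^^ i) u)) i)"
  have cp: "coeff p i = c ((f ^^ i) u)" if "i \<le> CARD('n)" for i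
  proof -
    have "coeff p i = (\<Sum>j\<le>CARD('n). if j = i then c ((f ^^ j) u) else 0)"
      unfolding p_def coeff_sum by (intro sum.cong) auto
    also have "\<dots> = c ((f ^^ i) u)" using that by simp
    finally show ?thesis .
  qed
  obtain i where i: "i \<le> CARD('n)" "c ((f ^^ i) u) \<noteq> 0" using c(1) unfolding T_def by blast
  have "p \<noteq> 0" using cp[OF i(1)] i(2) by auto
  moreover have "pev f u p = 0"
  proof -
    have "pev f u p = (\<Sum>i\<le>CARD('n). c ((f ^^ i) u) *s (f ^^ i) u)"
      unfolding p_def pev_sum pev_monom ..
    also have "\<dots> = (\<Sum>v\<in>T. c v *s v)"
      unfolding T_def by (subst sum.reindex[OF True]) (simp add: o_def)
    finally show ?thesis using c(2) by simp
  qed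
  ultimately show ?thesis by blast
qed

lemma eigen:
  assumes Sa: "\<And>a b. a \<in> S \<Longrightarrow> b \<in> S \<Longrightarrow> a + b \<in> S"
    and Ss: "\<And>c a. a \<in> S \<Longrightarrow> c *s a \<in> S"
    and Sf: "\<And>a. a \<in> S \<Longrightarrow> f a \<in> S"
    and uS: "u \<in> S" and unz: "u \<noteq> 0"
  shows "\<exists>w\<in>S. w \<noteq> 0 \<and> (\<exists>m. f w = m *s w)"
proof -
  have S0: "0 \<in> S" using Ss[OF uS, of 0] by simp
  have Sfi: "(f ^^ i) u \<in> S" for i by (induction i) (auto simp: uS Sf)
  have Ssum: "finite A \<Longrightarrow> (\<And>i. i \<in> A \<Longrightarrow> g i \<in> S) \<Longrightarrow> sum g A \<in> S" for A g
    by (induction A rule: finite_induct) (auto simp: S0 Sa)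
  have pS: "pev f u q \<in> S" for q unfolding pev_def by (rule Ssum) (auto intro: Ss Sfi)
  have main: "\<And>p. degree p = d \<Longrightarrow> p \<noteq> 0 \<Longrightarrow> pev f u p = 0 \<Longrightarrow> ?thesis" for d
  proof (induction d rule: less_induct)
    case (less d p)
    show ?case
    proof (cases "degree p = 0")
      case True
      then obtain a where pa: "p = [:a:]" by (meson degree_eq_zeroE)
      then have "a \<noteq> 0" using less.prems by auto
      moreover have "pev f u p = a *s u" using pa by (simp add: pev_def)
      ultimately show ?thesis using less.prems unz by (simp add: vec_eq_iff)
    next
      case False
      then have "\<not> constant (poly p)" by (simp add: constant_degree)
      then obtain m where "poly p m = 0" using fundamental_theorem_of_algebra by blast
      then obtain q where pq: "p = [:-m, 1:] * q" by (auto simp: poly_eq_0_iff_dvd elim: dvdE)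
      have qnz: "q \<noteq> 0" using pq less.prems by auto
      have "degree p = degree [:-m, 1::complex:] + degree q"
        unfolding pq by (rule degree_mult_eq) (use qnz in auto)
      then have dq: "degree q < d" using less.prems(1) by simp
      show ?thesis
      proof (cases "pev f u q = 0")
        case True
        show ?thesis by (rule less.IH[OF dq refl qnz True])
      next
        case False
        have "f (pev f u q) - m *s pev f u q = 0" using pev_lin[where m=m and q=q and u=u] pq less.prems(3) by simp
        then have "f (pev f u q) = m *s pev f u q" by simp
        then show ?thesis using pS False by blast
      qed
    qed
  qed
  obtain p where "p \<noteq> 0" "pev f u p = 0" using annih by blast
  then show ?thesis using main by blast
qed

end

lemma grp_conj_eq: "group K \<Longrightarrow> x \<in> carrier K \<Longrightarrow> h \<in> carrier K \<Longrightarrow>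
  x \<otimes>\<^bsub>K\<^esub> (inv\<^bsub>K\<^esub> x \<otimes>\<^bsub>K\<^esub> h \<otimes>\<^bsub>K\<^esub> x) = h \<otimes>\<^bsub>K\<^esub> x"
proof -
  assume "group K" "x \<in> carrier K" "h \<in> carrier K"
  then interpret group K by simp
  show ?thesis using \<open>x \<in> carrier K\<close> \<open>h \<in> carrier K\<close> by (simp add: m_assoc[symmetric])
qed

locale LS =
  fixes G :: "(real^'m^'m) set" and \<rho> :: "real^'m^'m \<Rightarrow> complex^'n^'n"
  assumes G_group: "group (matgrp G)"
    and \<rho>_one: "\<rho> (mat 1) = mat 1"
    and \<rho>_mult: "\<forall>A\<in>G. \<forall>B\<in>G. \<rho> (A ** B) = \<rho> A ** \<rho> B"
begin

abbreviation "\<Gamma> \<equiv> GxS1 G"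

lemma GxS1_eq: "GxS1 G = matgrp G \<times>\<times> circle_group"
  by (simp add: GxS1_def DirProd_def matgrp_def circle_group_def)

lemma grp: "group \<Gamma>"
  unfolding GxS1_eq by (rule DirProd_group[OF G_group circle_grp])

lemma carr: "carrier \<Gamma> = G \<times> sphere 0 1"
  by (simp add: GxS1_def)

lemma mult_eq: "x \<otimes>\<^bsub>\<Gamma>\<^esub> y = (fst x ** fst y, snd x * snd y)"
  by (simp add: GxS1_def case_prod_beta)

lemma one_eq: "\<one>\<^bsub>\<Gamma>\<^esub> = (mat 1, 1)"
  by (simp add: GxS1_def)

lemma one_G: "mat 1 \<in> G"
  using group.is_monoid[OF G_group] monoid.one_closed by (fastforce simp: matgrp_def)

lemma act_mult: "x \<in> carrier \<Gamma> \<Longrightarrow> y \<in> carrier \<Gamma> \<Longrightarrow>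
   act \<rho> (x \<otimes>\<^bsub>\<Gamma>\<^esub> y) w = act \<rho> x (act \<rho> y w)"
  using \<rho>_mult by (auto simp: act_def mult_eq carr mvs matrix_vector_mul_assoc)

lemma act_one: "act \<rho> \<one>\<^bsub>\<Gamma>\<^esub> w = w"
  by (simp add: act_def one_eq \<rho>_one)

lemma act_inv1: "x \<in> carrier \<Gamma> \<Longrightarrow> act \<rho> (inv\<^bsub>\<Gamma>\<^esub> x) (act \<rho> x w) = w"
  by (metis act_mult act_one group.l_inv group.inv_closed grp)

lemma act_inv2: "x \<in> carrier \<Gamma> \<Longrightarrow> act \<rho> x (act \<rho> (inv\<^bsub>\<Gamma>\<^esub> x) w) = w"
  by (metis act_mult act_one group.r_inv group.inv_closed grp)

lemma act_add: "act \<rho> x (u + w) = act \<rho> x u + act \<rho> x w"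
  by (simp add: act_def matrix_vector_right_distrib vector_add_ldistrib)

lemma act_scale: "act \<rho> x (c *s w) = c *s act \<rho> x w"
  by (simp add: act_def mvs)

lemma act_zero: "act \<rho> x 0 = 0"
  by (simp add: act_def)

lemma central: "c \<in> sphere 0 1 \<Longrightarrow> x \<in> carrier \<Gamma> \<Longrightarrow> (mat 1, c) \<otimes>\<^bsub>\<Gamma>\<^esub> x = x \<otimes>\<^bsub>\<Gamma>\<^esub> (mat 1, c)"
  by (simp add: mult_eq)

lemma act_c: "act \<rho> (mat 1, c) w = c *s w"
  by (simp add: act_def \<rho>_one)

lemma iso_sub: "isotropy G \<rho> w \<subseteq> carrier \<Gamma>"
  by (auto simp: isotropy_def)

lemma iso_subgroup: "subgroup (isotropy G \<rho> w) \<Gamma>"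
proof (rule group.subgroupI[OF grp])
  show "isotropy G \<rho> w \<subseteq> carrier \<Gamma>" by (rule iso_sub)
  show "isotropy G \<rho> w \<noteq> {}"
    using monoid.one_closed[OF group.is_monoid[OF grp]] act_one by (auto simp: isotropy_def) (metis prod.collapse)
  fix a b assume a: "a \<in> isotropy G \<rho> w" and b: "b \<in> isotropy G \<rho> w"
  have ac: "a \<in> carrier \<Gamma>" "act \<rho> a w = w" using a unfolding isotropy_def by blast+
  have bc: "b \<in> carrier \<Gamma>" "act \<rho> b w = w" using b unfolding isotropy_def by blast+
  have "inv\<^bsub>\<Gamma>\<^esub> a \<in> carrier \<Gamma>" using group.inv_closed[OF grp ac(1)] .
  moreover have "act \<rho> (inv\<^bsub>\<Gamma>\<^esub> a) w = w" using act_inv1[OF ac(1), of w] ac(2) by simp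
  ultimately show "inv\<^bsub>\<Gamma>\<^esub> a \<in> isotropy G \<rho> w" unfolding isotropy_def by blast
  have "a \<otimes>\<^bsub>\<Gamma>\<^esub> b \<in> carrier \<Gamma>" using monoid.m_closed[OF group.is_monoid[OF grp] ac(1) bc(1)] .
  moreover have "act \<rho> (a \<otimes>\<^bsub>\<Gamma>\<^esub> b) w = w" using act_mult[OF ac(1) bc(1), of w] ac(2) bc(2) by simp
  ultimately show "a \<otimes>\<^bsub>\<Gamma>\<^esub> b \<in> isotropy G \<rho> w" unfolding isotropy_def by blast
qed

lemma minus_one_in: "(mat 1, -1) \<in> carrier \<Gamma>"
  by (simp add: carr one_G)

lemma iso_proper: "w \<noteq> 0 \<Longrightarrow> isotropy G \<rho> w \<noteq> carrier \<Gamma>"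
proof
  assume w: "w \<noteq> 0" and eq: "isotropy G \<rho> w = carrier \<Gamma>"
  then have "act \<rho> (mat 1, -1) w = w" using minus_one_in by (auto simp: isotropy_def)
  then have "(-1::complex) *s w = w" by (simp add: act_c)
  then have "2 *s w = (0::complex^'n)"
    by (simp add: vec_eq_iff)
  with w show False by (simp add: vec_eq_iff)
qed

lemma iso_zero: "isotropy G \<rho> 0 = carrier \<Gamma>"
  by (auto simp: isotropy_def act_zero)

lemma central_normalizer:
  assumes g: "g \<in> carrier \<Gamma>" and gc: "\<And>x. x \<in> carrier \<Gamma> \<Longrightarrow> g \<otimes>\<^bsub>\<Gamma>\<^esub> x = x \<otimes>\<^bsub>\<Gamma>\<^esub> g"
    and K: "K \<subseteq> carrier \<Gamma>"
  shows "g \<in> normalizer \<Gamma> K"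
proof -
  have e: "g \<otimes>\<^bsub>\<Gamma>\<^esub> h \<otimes>\<^bsub>\<Gamma>\<^esub> inv\<^bsub>\<Gamma>\<^esub> g = h" if h: "h \<in> K" for h
  proof -
    have hc: "h \<in> carrier \<Gamma>" using h K by blast
    have "g \<otimes>\<^bsub>\<Gamma>\<^esub> h \<otimes>\<^bsub>\<Gamma>\<^esub> inv\<^bsub>\<Gamma>\<^esub> g = h \<otimes>\<^bsub>\<Gamma>\<^esub> g \<otimes>\<^bsub>\<Gamma>\<^esub> inv\<^bsub>\<Gamma>\<^esub> g"
      using gc[OF hc] by simp
    also have "\<dots> = h \<otimes>\<^bsub>\<Gamma>\<^esub> (g \<otimes>\<^bsub>\<Gamma>\<^esub> inv\<^bsub>\<Gamma>\<^esub> g)"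
      by (rule monoid.m_assoc[OF group.is_monoid[OF grp] hc g group.inv_closed[OF grp g]])
    also have "\<dots> = h" using group.r_inv[OF grp g] monoid.r_one[OF group.is_monoid[OF grp] hc] by simp
    finally show ?thesis .
  qed
  have "g <#\<^bsub>\<Gamma>\<^esub> K #>\<^bsub>\<Gamma>\<^esub> inv\<^bsub>\<Gamma>\<^esub> g = (\<lambda>h. g \<otimes>\<^bsub>\<Gamma>\<^esub> h \<otimes>\<^bsub>\<Gamma>\<^esub> inv\<^bsub>\<Gamma>\<^esub> g) ` K"
    unfolding l_coset_def r_coset_def by blast
  also have "\<dots> = (\<lambda>h. h) ` K" using e by (intro image_cong) auto
  also have "\<dots> = K" by simp
  finally have "g <#\<^bsub>\<Gamma>\<^esub> K #>\<^bsub>\<Gamma>\<^esub> inv\<^bsub>\<Gamma>\<^esub> g = K" .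
  then show ?thesis using g K unfolding normalizer_def stabilizer_def by simp
qed

lemma c_normalizer: "c \<in> sphere 0 1 \<Longrightarrow> K \<subseteq> carrier \<Gamma> \<Longrightarrow> (mat 1, c) \<in> normalizer \<Gamma> K"
  by (rule central_normalizer) (auto simp: carr one_G central)

end

locale LS2 = LS +
  fixes H and v0
  assumes H_max: "is_maximal_isotropy_subgroup G \<rho> H"
    and H_def: "H = isotropy G \<rho> v0"
    and G_compact: "compact G"
    and \<rho>_cont: "continuous_on G \<rho>"
begin

lemma v0_nz: "v0 \<noteq> 0"
proof
  assume "v0 = 0"
  then have "H = carrier \<Gamma>" using H_def iso_zero by simp
  with H_max show False unfolding is_maximal_isotropy_subgroup_def by blast
qed

lemma H_sub: "H \<subseteq> carrier \<Gamma>" unfolding H_def by (rule iso_sub)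

lemma H_subgroup: "subgroup H \<Gamma>" unfolding H_def by (rule iso_subgroup)

definition "S = {w. \<forall>h\<in>H. act \<rho> h w = w}"

lemma v0_S: "v0 \<in> S" unfolding S_def by (auto simp: H_def isotropy_def)

lemma S_iso: assumes w: "w \<in> S" and nz: "w \<noteq> 0" shows "isotropy G \<rho> w = H"
proof -
  have a: "is_isotropy_subgroup G \<rho> (isotropy G \<rho> w)" unfolding is_isotropy_subgroup_def by blast
  have b: "isotropy G \<rho> w \<noteq> carrier \<Gamma>" by (rule iso_proper[OF nz])
  have c: "H \<subseteq> isotropy G \<rho> w" using w H_sub unfolding S_def isotropy_def by blast
  show ?thesis using H_max a b c unfolding is_maximal_isotropy_subgroup_def by blast
qed

lemma N_sub: "normalizer \<Gamma> H \<subseteq> carrier \<Gamma>"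
  by (auto simp: normalizer_def stabilizer_def)

lemma N_subgroup: "subgroup (normalizer \<Gamma> H) \<Gamma>"
  by (rule group.normalizer_imp_subgroup[OF grp H_sub])

lemma H_normal: "normal H (NH_group G H)"
  unfolding NH_group_def by (rule group.subgroup_in_normalizer[OF grp H_subgroup])

lemma NH_grp: "group (NH_group G H)"
  unfolding NH_group_def by (rule subgroup.subgroup_is_group[OF N_subgroup grp])

lemma conj_in: assumes x: "x \<in> normalizer \<Gamma> H" and h: "h \<in> H"
  shows "inv\<^bsub>\<Gamma>\<^esub> x \<otimes>\<^bsub>\<Gamma>\<^esub> h \<otimes>\<^bsub>\<Gamma>\<^esub> x \<in> H"
proof -
  have "inv\<^bsub>NH_group G H\<^esub> x \<otimes>\<^bsub>NH_group G H\<^esub> h \<otimes>\<^bsub>NH_group G H\<^esub> x \<in> H"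
    using normal.inv_op_closed1[OF H_normal] x h by (simp add: NH_group_def)
  moreover have "inv\<^bsub>NH_group G H\<^esub> x = inv\<^bsub>\<Gamma>\<^esub> x"
    unfolding NH_group_def using group.m_inv_consistent[OF grp N_subgroup x] .
  ultimately show ?thesis by (simp add: NH_group_def)
qed

lemma act_S: assumes x: "x \<in> normalizer \<Gamma> H" and w: "w \<in> S" shows "act \<rho> x w \<in> S"
  unfolding S_def
proof (intro CollectI ballI)
  fix h assume h: "h \<in> H"
  have xc: "x \<in> carrier \<Gamma>" using x N_sub by auto
  have hc: "h \<in> carrier \<Gamma>" using h H_sub by auto
  have e1: "x \<otimes>\<^bsub>\<Gamma>\<^esub> (inv\<^bsub>\<Gamma>\<^esub> x \<otimes>\<^bsub>\<Gamma>\<^esub> h \<otimes>\<^bsub>\<Gamma>\<^esub> x) = h \<otimes>\<^bsub>\<Gamma>\<^esub> x"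
    by (rule grp_conj_eq[OF grp xc hc])
  have e2: "act \<rho> (inv\<^bsub>\<Gamma>\<^esub> x \<otimes>\<^bsub>\<Gamma>\<^esub> h \<otimes>\<^bsub>\<Gamma>\<^esub> x) w = w"
    using conj_in[OF x h] w by (auto simp: S_def)
  have cc: "inv\<^bsub>\<Gamma>\<^esub> x \<otimes>\<^bsub>\<Gamma>\<^esub> h \<otimes>\<^bsub>\<Gamma>\<^esub> x \<in> carrier \<Gamma>"
    using conj_in[OF x h] H_sub by blast
  have "act \<rho> h (act \<rho> x w) = act \<rho> (h \<otimes>\<^bsub>\<Gamma>\<^esub> x) w" using act_mult[OF hc xc] by simp
  also have "\<dots> = act \<rho> (x \<otimes>\<^bsub>\<Gamma>\<^esub> (inv\<^bsub>\<Gamma>\<^esub> x \<otimes>\<^bsub>\<Gamma>\<^esub> h \<otimes>\<^bsub>\<Gamma>\<^esub> x)) w"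
    using e1 by simp
  also have "\<dots> = act \<rho> x (act \<rho> (inv\<^bsub>\<Gamma>\<^esub> x \<otimes>\<^bsub>\<Gamma>\<^esub> h \<otimes>\<^bsub>\<Gamma>\<^esub> x) w)"
    by (rule act_mult[OF xc cc])
  also have "\<dots> = act \<rho> x w" using e2 by simp
  finally show "act \<rho> h (act \<rho> x w) = act \<rho> x w" .
qed


lemma comp_bnd: "\<exists>C. \<forall>A\<in>G. cmod ((\<rho> A *v w) $ k) \<le> C"
proof -
  have c: "continuous_on G (\<lambda>A. \<rho> A $ k $ j)" for j
  proof -
    have "continuous_on G (\<lambda>A. \<rho> A $ k)"
      using continuous_on_compose[OF \<rho>_cont linear_continuous_on[OF bounded_linear_vec_nth[of k]]]
      by (simp add: o_def)
    then show ?thesis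
      using continuous_on_compose[OF _ linear_continuous_on[OF bounded_linear_vec_nth[of j]]]
      by (simp add: o_def)
  qed
  have "continuous_on G (\<lambda>A. (\<rho> A *v w) $ k)"
    unfolding matrix_vector_mult_def
    by (simp, intro continuous_on_sum continuous_on_mult_right c)
  then have "compact ((\<lambda>A. (\<rho> A *v w) $ k) ` G)"
    by (rule compact_continuous_image[OF _ G_compact])
  then have "bounded ((\<lambda>A. (\<rho> A *v w) $ k) ` G)" by (rule compact_imp_bounded)
  then show ?thesis unfolding bounded_iff by auto
qed

lemma act_bnd: "\<exists>C. \<forall>y\<in>carrier \<Gamma>. cmod (act \<rho> y w $ k) \<le> C"
proof -
  obtain C where C: "\<forall>A\<in>G. cmod ((\<rho> A *v w) $ k) \<le> C" using comp_bnd by blast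
  have "cmod (act \<rho> y w $ k) \<le> C" if "y \<in> carrier \<Gamma>" for y
    using that C by (auto simp: act_def carr norm_mult)
  then show ?thesis by blast
qed

lemma pow_act: assumes x: "x \<in> carrier \<Gamma>" and e: "act \<rho> x w = m *s w"
  shows "act \<rho> (x [^]\<^bsub>\<Gamma>\<^esub> (j::nat)) w = m ^ j *s w"
proof (induction j)
  case 0 then show ?case by (simp add: act_one)
next
  case (Suc j)
  have xj: "x [^]\<^bsub>\<Gamma>\<^esub> j \<in> carrier \<Gamma>" by (rule monoid.nat_pow_closed[OF group.is_monoid[OF grp] x])
  have "act \<rho> (x [^]\<^bsub>\<Gamma>\<^esub> Suc j) w = act \<rho> (x [^]\<^bsub>\<Gamma>\<^esub> j \<otimes>\<^bsub>\<Gamma>\<^esub> x) w"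
    by (simp add: monoid.nat_pow_Suc[OF group.is_monoid[OF grp]])
  also have "\<dots> = act \<rho> (x [^]\<^bsub>\<Gamma>\<^esub> j) (m *s w)" using act_mult[OF xj x] e by simp
  also have "\<dots> = m ^ Suc j *s w" using Suc by (simp add: act_scale vec_eq_iff)
  finally show ?case .
qed

lemma eig_le1: assumes x: "x \<in> carrier \<Gamma>" and w: "w \<noteq> 0" and e: "act \<rho> x w = m *s w"
  shows "cmod m \<le> 1"
proof (rule ccontr)
  assume "\<not> cmod m \<le> 1"
  then have m1: "1 < cmod m" by simp
  obtain k where k: "w $ k \<noteq> 0" using w by (auto simp: vec_eq_iff)
  obtain C where C: "\<forall>y\<in>carrier \<Gamma>. cmod (act \<rho> y w $ k) \<le> C" using act_bnd by blast
  obtain j where j: "C / cmod (w $ k) < cmod m ^ j" using real_arch_pow[OF m1] by blast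
  have "cmod (act \<rho> (x [^]\<^bsub>\<Gamma>\<^esub> j) w $ k) \<le> C"
    using C monoid.nat_pow_closed[OF group.is_monoid[OF grp] x] by blast
  then have "cmod m ^ j * cmod (w $ k) \<le> C" using pow_act[OF x e, of j] by (simp add: norm_mult norm_power)
  moreover have "C < cmod m ^ j * cmod (w $ k)" using j k by (simp add: divide_less_eq)
  ultimately show False by simp
qed

lemma eig_unit: assumes x: "x \<in> carrier \<Gamma>" and w: "w \<noteq> 0" and e: "act \<rho> x w = m *s w"
  shows "cmod m = 1"
proof -
  have ix: "inv\<^bsub>\<Gamma>\<^esub> x \<in> carrier \<Gamma>" by (rule group.inv_closed[OF grp x])
  have m0: "m \<noteq> 0"
  proof
    assume "m = 0"
    then have "act \<rho> x w = 0" using e by (simp add: vec_eq_iff)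
    then have "w = act \<rho> (inv\<^bsub>\<Gamma>\<^esub> x) 0" using act_inv1[OF x, of w] by simp
    then show False using w act_zero by simp
  qed
  have "w = act \<rho> (inv\<^bsub>\<Gamma>\<^esub> x) (m *s w)" using act_inv1[OF x, of w] e by simp
  then have "w = m *s act \<rho> (inv\<^bsub>\<Gamma>\<^esub> x) w" by (simp add: act_scale)
  then have "act \<rho> (inv\<^bsub>\<Gamma>\<^esub> x) w = (1 / m) *s w" using m0
    by (simp add: vec_eq_iff)
  from eig_le1[OF ix w this] have "1 \<le> cmod m" using m0 by (simp add: norm_divide divide_le_eq)
  with eig_le1[OF x w e] show ?thesis by simp
qed

lemma S_add: "a \<in> S \<Longrightarrow> b \<in> S \<Longrightarrow> a + b \<in> S"
  by (simp add: S_def act_add)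

lemma S_scale: "a \<in> S \<Longrightarrow> c *s a \<in> S"
  by (simp add: S_def act_scale)

lemma N_scalar: assumes x: "x \<in> normalizer \<Gamma> H"
  shows "\<exists>m. cmod m = 1 \<and> act \<rho> x v0 = m *s v0 \<and> (fst x, snd x / m) \<in> H"
proof -
  have xc: "x \<in> carrier \<Gamma>" using x N_sub by blast
  interpret linf "act \<rho> x" by unfold_locales (simp_all add: act_add act_scale)
  obtain w m where w: "w \<in> S" "w \<noteq> 0" and e: "act \<rho> x w = m *s w"
    using eigen[of S, OF S_add S_scale act_S[OF x] v0_S v0_nz] by blast
  have m1: "cmod m = 1" by (rule eig_unit[OF xc w(2) e])
  then have m0: "m \<noteq> 0" by auto
  have yc: "(fst x, snd x / m) \<in> carrier \<Gamma>" using xc m1 by (auto simp: carr norm_divide)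
  have "act \<rho> (fst x, snd x / m) w = (1 / m) *s act \<rho> x w"
    by (simp add: act_def vec_eq_iff)
  also have "\<dots> = w" using e m0 by (simp add: vec_eq_iff)
  finally have "(fst x, snd x / m) \<in> isotropy G \<rho> w" using yc by (simp add: isotropy_def)
  then have yH: "(fst x, snd x / m) \<in> H" using S_iso[OF w] by simp
  then have "act \<rho> (fst x, snd x / m) v0 = v0" using H_def by (simp add: isotropy_def)
  then have "act \<rho> x v0 = m *s v0" using m0 by (simp add: act_def vec_eq_iff) (metis mult.assoc mult.commute nonzero_eq_divide_eq times_divide_eq_right)
  then show ?thesis using m1 yH by blast
qed


definition "k0 = (SOME k. v0 $ k \<noteq> 0)"

lemma k0: "v0 $ k0 \<noteq> 0"
proof -
  have "\<exists>k. v0 $ k \<noteq> 0" using v0_nz by (auto simp: vec_eq_iff)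
  then show ?thesis unfolding k0_def by (rule someI_ex)
qed

definition "Lam x = (act \<rho> x v0 $ k0) / (v0 $ k0)"

definition "phi c = H #>\<^bsub>\<Gamma>\<^esub> (mat 1, c)"

lemma Lam_eq: "act \<rho> x v0 = m *s v0 \<Longrightarrow> Lam x = m"
  using k0 by (simp add: Lam_def)

lemma rc_eq: "H #>\<^bsub>NH_group G H\<^esub> x = H #>\<^bsub>\<Gamma>\<^esub> x"
  by (simp add: r_coset_def NH_group_def)

lemma sm_eq: "A <#>\<^bsub>NH_group G H\<^esub> B = A <#>\<^bsub>\<Gamma>\<^esub> B"
  by (simp add: set_mult_def NH_group_def)

lemma N_decomp: assumes x: "x \<in> normalizer \<Gamma> H"
  shows "cmod (Lam x) = 1 \<and> H #>\<^bsub>\<Gamma>\<^esub> x = phi (Lam x)"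
proof -
  obtain m where m: "cmod m = 1" "act \<rho> x v0 = m *s v0" "(fst x, snd x / m) \<in> H"
    using N_scalar[OF x] by blast
  have L: "Lam x = m" by (rule Lam_eq[OF m(2)])
  have m0: "m \<noteq> 0" using m(1) by auto
  let ?y = "(fst x, snd x / m)" and ?c = "(mat 1, m) :: (real^'m^'m) \<times> complex"
  have yc: "?y \<in> carrier \<Gamma>" using m(3) H_sub by blast
  have cc: "?c \<in> carrier \<Gamma>" using m(1) by (simp add: carr one_G)
  have xe: "x = ?y \<otimes>\<^bsub>\<Gamma>\<^esub> ?c" using m0 by (simp add: mult_eq)
  have "H #>\<^bsub>\<Gamma>\<^esub> x = H #>\<^bsub>\<Gamma>\<^esub> (?y \<otimes>\<^bsub>\<Gamma>\<^esub> ?c)"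
    using xe by (rule arg_cong[where f="\<lambda>z. H #>\<^bsub>\<Gamma>\<^esub> z"])
  also have "\<dots> = (H #>\<^bsub>\<Gamma>\<^esub> ?y) #>\<^bsub>\<Gamma>\<^esub> ?c"
    by (rule group.coset_mult_assoc[OF grp H_sub yc cc, symmetric])
  also have "\<dots> = H #>\<^bsub>\<Gamma>\<^esub> ?c"
    using group.coset_join2[OF grp yc H_subgroup m(3)] by simp
  finally show ?thesis using L m(1) by (simp add: phi_def)
qed

lemma coset_act: assumes a: "a \<in> carrier \<Gamma>" and b: "b \<in> carrier \<Gamma>"
  and eq: "H #>\<^bsub>\<Gamma>\<^esub> a = H #>\<^bsub>\<Gamma>\<^esub> b" and e: "act \<rho> b v0 = m *s v0"
  shows "act \<rho> a v0 = m *s v0"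
proof -
  have "a \<in> H #>\<^bsub>\<Gamma>\<^esub> b" using group.rcos_self[OF grp a H_subgroup] eq by simp
  then obtain h where h: "h \<in> H" "a = h \<otimes>\<^bsub>\<Gamma>\<^esub> b" unfolding r_coset_def by blast
  have hc: "h \<in> carrier \<Gamma>" using h(1) H_sub by blast
  have "act \<rho> a v0 = act \<rho> h (m *s v0)" using h(2) act_mult[OF hc b] e by simp
  also have "\<dots> = m *s v0" using h(1) H_def by (simp add: act_scale isotropy_def)
  finally show ?thesis .
qed

lemma c_carr: "c \<in> sphere 0 1 \<Longrightarrow> (mat 1, c) \<in> carrier \<Gamma>"
  by (simp add: carr one_G)

lemma phi_inj: assumes c: "c \<in> sphere 0 1" and d: "d \<in> sphere 0 1" and eq: "phi c = phi d"
  shows "c = d"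
proof -
  have "act \<rho> (mat 1, c) v0 = d *s v0"
    by (rule coset_act[OF c_carr[OF c] c_carr[OF d]]) (use eq in \<open>simp_all add: phi_def act_c\<close>)
  then have "c *s v0 = d *s v0" by (simp add: act_c)
  then have "c * v0 $ k0 = d * v0 $ k0" by (metis vector_smult_component)
  then show ?thesis using k0 by simp
qed

lemma c_N: "c \<in> sphere 0 1 \<Longrightarrow> (mat 1, c) \<in> normalizer \<Gamma> H"
  by (rule c_normalizer[OF _ H_sub])

lemma NmodH_carrier: "carrier (NmodH G H) = phi ` sphere 0 1"
proof -
  have "carrier (NmodH G H) = (\<lambda>x. H #>\<^bsub>\<Gamma>\<^esub> x) ` normalizer \<Gamma> H"
    by (simp add: NmodH_def carrier_FactGroup rc_eq) (simp add: NH_group_def)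
  also have "\<dots> = phi ` sphere 0 1"
  proof
    show "(\<lambda>x. H #>\<^bsub>\<Gamma>\<^esub> x) ` normalizer \<Gamma> H \<subseteq> phi ` sphere 0 1"
      using N_decomp by fastforce
    show "phi ` sphere 0 1 \<subseteq> (\<lambda>x. H #>\<^bsub>\<Gamma>\<^esub> x) ` normalizer \<Gamma> H"
      using c_N unfolding phi_def by blast
  qed
  finally show ?thesis .
qed

lemma phi_mult: assumes c: "c \<in> sphere 0 1" and d: "d \<in> sphere 0 1"
  shows "phi (c * d) = phi c \<otimes>\<^bsub>NmodH G H\<^esub> phi d"
proof -
  have "phi c \<otimes>\<^bsub>NmodH G H\<^esub> phi d = (H #>\<^bsub>NH_group G H\<^esub> (mat 1, c)) <#>\<^bsub>NH_group G H\<^esub> (H #>\<^bsub>NH_group G H\<^esub> (mat 1, d))"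
    by (simp add: NmodH_def phi_def rc_eq)
  also have "\<dots> = H #>\<^bsub>NH_group G H\<^esub> ((mat 1, c) \<otimes>\<^bsub>NH_group G H\<^esub> (mat 1, d))"
    by (rule normal.rcos_sum[OF H_normal]) (use c_N c d in \<open>simp_all add: NH_group_def\<close>)
  also have "\<dots> = phi (c * d)"
    by (simp add: rc_eq phi_def) (simp add: NH_group_def mult_eq)
  finally show ?thesis by simp
qed

lemma phi_iso: "phi \<in> iso circle_group (NmodH G H)"
proof -
  have "phi \<in> hom circle_group (NmodH G H)"
    unfolding hom_def using NmodH_carrier phi_mult by (auto simp: circle_group_def)
  moreover have "bij_betw phi (carrier circle_group) (carrier (NmodH G H))"
    unfolding bij_betw_def inj_on_def using NmodH_carrier phi_inj by (auto simp: circle_group_def)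
  ultimately show ?thesis by (simp add: iso_def)
qed


lemma comp_cont: "continuous_on G (\<lambda>A. (\<rho> A *v w) $ k)"
proof -
  have c: "continuous_on G (\<lambda>A. \<rho> A $ k $ j)" for j
  proof -
    have "continuous_on G (\<lambda>A. \<rho> A $ k)"
      using continuous_on_compose[OF \<rho>_cont linear_continuous_on[OF bounded_linear_vec_nth[of k]]]
      by (simp add: o_def)
    then show ?thesis
      using continuous_on_compose[OF _ linear_continuous_on[OF bounded_linear_vec_nth[of j]]]
      by (simp add: o_def)
  qed
  show ?thesis
    unfolding matrix_vector_mult_def
    by (simp, intro continuous_on_sum continuous_on_mult_right c)
qed

abbreviation "XN \<equiv> subtopology euclidean (normalizer \<Gamma> H)"

lemma topX: "topspace XN = normalizer \<Gamma> H" by simp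

lemma openin_NmodH: "openin (NmodH_top G H) U \<longleftrightarrow>
   U \<subseteq> carrier (NmodH G H) \<and> openin XN {x \<in> topspace XN. H #>\<^bsub>NH_group G H\<^esub> x \<in> U}"
  unfolding NmodH_top_def quotient_topology_def
  by (simp only: topology_inverse'[OF istopology_quotient])

lemma topspace_NmodH: "topspace (NmodH_top G H) = carrier (NmodH G H)"
proof -
  have "openin (NmodH_top G H) (carrier (NmodH G H))"
  proof -
    have "{x \<in> topspace XN. H #>\<^bsub>NH_group G H\<^esub> x \<in> carrier (NmodH G H)} = topspace XN"
      by (auto simp: NmodH_def carrier_FactGroup NH_group_def)
    then show ?thesis unfolding openin_NmodH by simp
  qed
  then have "carrier (NmodH G H) \<subseteq> topspace (NmodH_top G H)" by (rule openin_subset)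
  moreover have "topspace (NmodH_top G H) \<subseteq> carrier (NmodH G H)"
    using openin_NmodH[of "topspace (NmodH_top G H)"] by simp
  ultimately show ?thesis by blast
qed

lemma q_eq: "x \<in> normalizer \<Gamma> H \<Longrightarrow> H #>\<^bsub>NH_group G H\<^esub> x = phi (Lam x)"
  using N_decomp rc_eq by simp

lemma Lam_cont: "continuous_on (normalizer \<Gamma> H) Lam"
proof -
  have f: "fst ` normalizer \<Gamma> H \<subseteq> G" using N_sub by (auto simp: carr)
  have "continuous_on (normalizer \<Gamma> H) (\<lambda>x. (\<rho> (fst x) *v v0) $ k0)"
    by (rule continuous_on_compose2[OF comp_cont continuous_on_fst[OF continuous_on_id] f])
  then have "continuous_on (normalizer \<Gamma> H) (\<lambda>x. snd x * (\<rho> (fst x) *v v0) $ k0)"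
    by (rule continuous_on_mult[OF continuous_on_snd[OF continuous_on_id]])
  then have "continuous_on (normalizer \<Gamma> H) (\<lambda>x. snd x * (\<rho> (fst x) *v v0) $ k0 / v0 $ k0)"
    by (rule continuous_on_divide[OF _ continuous_on_const]) (simp add: k0)
  then show ?thesis by (simp add: Lam_def act_def)
qed

lemma cm_Lam: "continuous_map XN circle_top Lam"
  unfolding circle_top_def using Lam_cont N_decomp by auto

lemma cm_c: "continuous_map circle_top XN (\<lambda>c. (mat 1, c))"
  unfolding circle_top_def using c_N by (auto intro!: continuous_intros)

lemma phi_cont: "continuous_map circle_top (NmodH_top G H) phi"
  unfolding continuous_map_def
proof (intro conjI allI impI)
  show "phi \<in> topspace circle_top \<rightarrow> topspace (NmodH_top G H)"
    using NmodH_carrier topspace_NmodH by (auto simp: circle_top_def)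
  fix U assume U: "openin (NmodH_top G H) U"
  let ?V = "{x \<in> topspace XN. H #>\<^bsub>NH_group G H\<^esub> x \<in> U}"
  have "openin XN ?V" using U openin_NmodH by blast
  then have "openin circle_top {c \<in> topspace circle_top. (mat 1, c) \<in> ?V}"
    by (rule openin_continuous_map_preimage[OF cm_c])
  moreover have "{c \<in> topspace circle_top. (mat 1, c) \<in> ?V} = {c \<in> topspace circle_top. phi c \<in> U}"
    using c_N by (auto simp: circle_top_def rc_eq phi_def)
  ultimately show "openin circle_top {c \<in> topspace circle_top. phi c \<in> U}" by simp
qed

lemma phi_open: "open_map circle_top (NmodH_top G H) phi"
  unfolding open_map_def
proof (intro allI impI)
  fix U assume U: "openin circle_top U"
  then have Us: "U \<subseteq> sphere 0 1" using openin_subset by (fastforce simp: circle_top_def)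
  have "openin XN {x \<in> topspace XN. Lam x \<in> U}"
    by (rule openin_continuous_map_preimage[OF cm_Lam U])
  moreover have "{x \<in> topspace XN. Lam x \<in> U} = {x \<in> topspace XN. H #>\<^bsub>NH_group G H\<^esub> x \<in> phi ` U}"
  proof -
    have "Lam x \<in> U \<longleftrightarrow> phi (Lam x) \<in> phi ` U" if x: "x \<in> normalizer \<Gamma> H" for x
    proof
      assume "phi (Lam x) \<in> phi ` U"
      then obtain c where c: "c \<in> U" "phi (Lam x) = phi c" by blast
      then have "Lam x = c" using phi_inj[of "Lam x" c] N_decomp[OF x] Us by auto
      then show "Lam x \<in> U" using c by simp
    qed auto
    then show ?thesis using q_eq by auto
  qed
  moreover have "phi ` U \<subseteq> carrier (NmodH G H)" using Us NmodH_carrier by auto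
  ultimately show "openin (NmodH_top G H) (phi ` U)" unfolding openin_NmodH by simp
qed

lemma phi_homeo: "homeomorphic_map circle_top (NmodH_top G H) phi"
proof (rule bijective_open_imp_homeomorphic_map[OF phi_cont phi_open])
  show "phi ` topspace circle_top = topspace (NmodH_top G H)"
    using NmodH_carrier topspace_NmodH by (simp add: circle_top_def)
  show "inj_on phi (topspace circle_top)"
    using phi_inj by (auto simp: circle_top_def inj_on_def)
qed

lemma N0_eq: "N0 G H = carrier (NmodH G H)"
proof -
  have "connected_space circle_top" unfolding circle_top_def
    by (rule connected_space_subtopology) (simp add: connected_sphere)
  then have "connectedin (NmodH_top G H) (phi ` topspace circle_top)"
    by (intro connectedin_continuous_map_image[OF phi_cont]) (simp add: connectedin_topspace)
  then have cT: "connectedin (NmodH_top G H) (carrier (NmodH G H))"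
    using NmodH_carrier by (simp add: circle_top_def)
  have "phi 1 = H #>\<^bsub>\<Gamma>\<^esub> \<one>\<^bsub>\<Gamma>\<^esub>" by (simp only: phi_def one_eq)
  also have "\<dots> = H" by (rule group.coset_mult_one[OF grp H_sub])
  finally have "phi 1 = H" .
  moreover have "phi 1 \<in> phi ` sphere 0 1" by (rule imageI) simp
  ultimately have H1: "H \<in> carrier (NmodH G H)" using NmodH_carrier by simp
  show ?thesis
  proof
    show "N0 G H \<subseteq> carrier (NmodH G H)"
      using connected_component_of_subset_topspace[of "NmodH_top G H" H] topspace_NmodH
      unfolding N0_def by simp
    show "carrier (NmodH G H) \<subseteq> N0 G H"
      unfolding N0_def connected_component_of_def using cT H1 by blast
  qed
qed

end

theorem lemma3p10:
  fixes G :: "(real^'m^'m) set" and \<rho> :: "real^'m^'m \<Rightarrow> complex^'n^'n"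
    and H :: "((real^'m^'m) \<times> complex) set"
  assumes G_group: "group (matgrp G)"
    and G_compact: "compact G"
    and \<rho>_cont: "continuous_on G \<rho>"
    and \<rho>_one: "\<rho> (mat 1) = mat 1"
    and \<rho>_mult: "\<forall>A\<in>G. \<forall>B\<in>G. \<rho> (A ** B) = \<rho> A ** \<rho> B"
    and irred: "complex_irreducible G \<rho>"
    and H_max: "is_maximal_isotropy_subgroup G \<rho> H"
  shows "((\<exists>f. top_group_iso circle_top circle_group
                 (subtopology (NmodH_top G H) (N0 G H)) ((NmodH G H)\<lparr>carrier := N0 G H\<rparr>) f)
          \<and> (trivial_group (NmodH G H Mod N0 G H)
             \<or> (NmodH G H Mod N0 G H) \<cong> integer_mod_group 2))
       \<or> ((\<exists>f. top_group_iso SU2_top SU2_group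
                 (subtopology (NmodH_top G H) (N0 G H)) ((NmodH G H)\<lparr>carrier := N0 G H\<rparr>) f)
          \<and> (\<exists>f. top_group_iso SU2_top SU2_group (NmodH_top G H) (NmodH G H) f))"
proof -
  obtain v0 where Hv: "H = isotropy G \<rho> v0"
    using H_max unfolding is_maximal_isotropy_subgroup_def is_isotropy_subgroup_def by blast
  interpret LS2 G \<rho> H v0
    by (intro LS2.intro LS.intro LS2_axioms.intro) (use G_group \<rho>_one \<rho>_mult H_max Hv G_compact \<rho>_cont in auto)
  have grpN: "group (NmodH G H)" unfolding NmodH_def by (rule normal.factorgroup_is_group[OF H_normal])
  have cne: "carrier (NmodH G H) \<noteq> {}" using NmodH_carrier by auto
  have "carrier (NmodH G H Mod carrier (NmodH G H)) = {carrier (NmodH G H)}"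
  proof -
    have "carrier (NmodH G H) #>\<^bsub>NmodH G H\<^esub> x = carrier (NmodH G H)" if "x \<in> carrier (NmodH G H)" for x
      by (rule group.coset_join2[OF grpN that group.subgroup_self[OF grpN] that])
    then show ?thesis using cne by (auto simp: carrier_FactGroup)
  qed
  moreover have "group (NmodH G H Mod carrier (NmodH G H))"
    by (rule normal.factorgroup_is_group[OF group.normal_self[OF grpN]])
  ultimately have triv: "trivial_group (NmodH G H Mod N0 G H)"
    unfolding N0_eq trivial_group_def by simp
  have e1: "subtopology (NmodH_top G H) (N0 G H) = NmodH_top G H"
    unfolding N0_eq topspace_NmodH[symmetric] by simp
  have e2: "(NmodH G H)\<lparr>carrier := N0 G H\<rparr> = NmodH G H"
    unfolding N0_eq by simp
  have "top_group_iso circle_top circle_group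
          (subtopology (NmodH_top G H) (N0 G H)) ((NmodH G H)\<lparr>carrier := N0 G H\<rparr>) phi"
    unfolding top_group_iso_def e1 e2 using phi_iso phi_homeo by simp
  then show ?thesis using triv by blast
qed

end
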